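(* Let $T_0,\dots,T_n$ be second-order rational operators. Then $T_0\to T_1\to\cdots\to T_n$ is an $n$-step rational Darboux transformation if and only if it is a factorization chain.
   Context: $D=d/dz$. An $n$-th order rational operator is $\sum_{k=0}^n p_k(z)D^k$ with rational $p_k$, $p_n\ne0$. $T_0\to\cdots\to T_n$ is an $n$-step rational Darboux transformation if there exist first-order rational operators $A_1,\dots,A_n$ with $A_kT_{k-1}=T_kA_k$ for $k=1,\dots,n$. It is a factorization chain if there exist first-order rational operators $A_k,B_k$ and constants $\lambda_k$ ($k=1,\dots,n$) with $T_{k-1}=B_kA_k+\lambda_k$ and $T_k=A_kB_k+\lambda_k$ for $k=1,\dots,n$. *)

theory Defs
  imports Complex_Main "HOL-Computational_Algebra.Polynomial_Factorial"
    "HOL-Computational_Algebra.Normalized_Fraction" "HOL-Computational_Algebra.Field_as_Ring"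
begin

type_synonym rfun = "complex poly fract"

definition rderiv :: "rfun \<Rightarrow> rfun" where
  "rderiv x = (case quot_of_fract x of (p, q) \<Rightarrow>
      Fract (pderiv p * q - p * pderiv q) (q * q))"

definition rconst :: "complex \<Rightarrow> rfun" where
  "rconst c = to_fract [:c:]"

text \<open>A rational differential operator sum_k p_k(z) D^k is encoded as the polynomial
  (in the formal variable D) with coefficients p_k; its order is the degree.
  Composition of operators uses the Leibniz rule
  (a D^i)(b D^j) = sum_{k<=i} (i choose k) a b^(k) D^(i+j-k).\<close>
type_synonym dop = "rfun poly"

definition dop_comp :: "dop \<Rightarrow> dop \<Rightarrow> dop" where
  "dop_comp A B = (\<Sum>i\<le>degree A. \<Sum>k\<le>i. \<Sum>j\<le>degree B.
      monom (coeff A i * of_nat (i choose k) * (rderiv ^^ k) (coeff B j)) (i + j - k))"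

definition order_op :: "nat \<Rightarrow> dop \<Rightarrow> bool" where
  "order_op m T \<longleftrightarrow> T \<noteq> 0 \<and> degree T = m"

definition rational_darboux_chain :: "nat \<Rightarrow> (nat \<Rightarrow> dop) \<Rightarrow> bool" where
  "rational_darboux_chain n T \<longleftrightarrow>
     (\<exists>A :: nat \<Rightarrow> dop. \<forall>k\<in>{1..n}. order_op 1 (A k) \<and>
        dop_comp (A k) (T (k - 1)) = dop_comp (T k) (A k))"

definition factorization_chain :: "nat \<Rightarrow> (nat \<Rightarrow> dop) \<Rightarrow> bool" where
  "factorization_chain n T \<longleftrightarrow>
     (\<exists>(A :: nat \<Rightarrow> dop) (B :: nat \<Rightarrow> dop) (lam :: nat \<Rightarrow> complex).
        \<forall>k\<in>{1..n}. order_op 1 (A k) \<and> order_op 1 (B k) \<and>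
          T (k - 1) = dop_comp (B k) (A k) + [:rconst (lam k):] \<and>
          T k = dop_comp (A k) (B k) + [:rconst (lam k):])"

end

theory Submission imports Defs begin

lemma rderiv_Fract:
  assumes "q \<noteq> 0"
  shows "rderiv (Fract p q) = Fract (pderiv p * q - p * pderiv q) (q * q)"
proof -
  obtain p0 q0 where pq: "quot_of_fract (Fract p q) = (p0, q0)" by (cases "quot_of_fract (Fract p q)")
  have q0: "q0 \<noteq> 0" using snd_quot_of_fract_nonzero[of "Fract p q"] pq by simp
  have e: "Fract p0 q0 = Fract p q" using Fract_quot_of_fract[of "Fract p q"] pq by simp
  hence h: "p0 * q = p * q0" using eq_fract(1)[OF q0 assms] by simp
  hence h': "pderiv p0 * q + p0 * pderiv q = pderiv p * q0 + p * pderiv q0"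
    by (metis pderiv_mult add.commute mult.commute)
  have "rderiv (Fract p q) = Fract (pderiv p0 * q0 - p0 * pderiv q0) (q0 * q0)"
    unfolding rderiv_def pq by simp
  also have "\<dots> = Fract (pderiv p * q - p * pderiv q) (q * q)"
    using q0 assms h h' by (simp add: eq_fract) algebra
  finally show ?thesis .
qed

lemma rderiv_add: "rderiv (x + y) = rderiv x + rderiv y"
proof (cases x; cases y)
  fix a b c d :: "complex poly"
  assume x: "x = Fract a b" "b \<noteq> 0" and y: "y = Fract c d" "d \<noteq> 0"
  show ?thesis using x y by (simp add: rderiv_Fract eq_fract pderiv_add pderiv_mult algebra_simps)
qed

lemma rderiv_mult: "rderiv (x * y) = rderiv x * y + x * rderiv y"
proof (cases x; cases y)
  fix a b c d :: "complex poly"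
  assume x: "x = Fract a b" "b \<noteq> 0" and y: "y = Fract c d" "d \<noteq> 0"
  show ?thesis using x y by (simp add: rderiv_Fract eq_fract pderiv_add pderiv_mult algebra_simps)
qed

lemma to_fract_Fract: "to_fract x = Fract x 1"
  by (simp add: to_fract_def)

lemma rderiv_rconst: "rderiv (rconst c) = 0"
  by (simp add: rconst_def to_fract_Fract rderiv_Fract Zero_fract_def eq_fract)

lemma rderiv_minus: "rderiv (- x) = - rderiv x"
proof -
  have "rderiv x + rderiv (- x) = 0" using rderiv_add[of x "-x"] rderiv_rconst[of 0] by (simp add: rconst_def)
  thus ?thesis by (simp add: add_eq_0_iff)
qed

lemma rderiv_diff: "rderiv (x - y) = rderiv x - rderiv y"
  using rderiv_add[of x "-y"] rderiv_minus[of y] by simp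

lemma rderiv_zero_const:
  assumes "rderiv x = 0" shows "\<exists>c. x = rconst c"
proof -
  obtain p q where pq: "quot_of_fract x = (p, q)" by (cases "quot_of_fract x")
  have q: "q \<noteq> 0" using snd_quot_of_fract_nonzero[of x] pq by simp
  have cop: "coprime p q" using coprime_quot_of_fract[of x] pq by simp
  have x: "x = Fract p q" using Fract_quot_of_fract[of x] pq by simp
  have "Fract (pderiv p * q - p * pderiv q) (q * q) = 0"
    using assms unfolding rderiv_def pq by simp
  hence e: "pderiv p * q = p * pderiv q" using q by (simp add: Zero_fract_def eq_fract)
  have "q dvd p * pderiv q" unfolding e[symmetric] by simp
  hence "q dvd pderiv q" using cop by (simp add: coprime_dvd_mult_right_iff coprime_commute)
  hence dq: "degree q = 0" by simp
  hence "pderiv q = 0" by (simp add: pderiv_eq_0_iff)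
  hence "pderiv p = 0" using e q by simp
  then obtain a where a: "p = [:a:]" using pderiv_iszero by blast
  obtain b where b: "q = [:b:]" using `pderiv q = 0` pderiv_iszero by blast
  have b0: "b \<noteq> 0" using q b by simp
  have "x = rconst (a / b)" unfolding x a b rconst_def to_fract_Fract
    using b0 by (simp add: eq_fract)
  thus ?thesis by blast
qed

lemma d2: "(rderiv ^^ 2) x = rderiv (rderiv x)" by (simp add: numeral_2_eq_2)

lemma comp12:
  assumes "a1 \<noteq> 0" "t2 \<noteq> 0"
  shows "dop_comp [:a0,a1:] [:t0,t1,t2:] = [: a0*t0 + a1*rderiv t0, a0*t1 + a1*t0 + a1*rderiv t1,
     a0*t2 + a1*t1 + a1*rderiv t2, a1*t2 :]"
  using assms unfolding dop_comp_def
  by (simp add: numeral_2_eq_2 atMost_Suc monom_Suc monom_0 algebra_simps)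

lemma comp21:
  assumes "a1 \<noteq> 0" "s2 \<noteq> 0"
  shows "dop_comp [:s0,s1,s2:] [:a0,a1:] = [: s0*a0 + s1*rderiv a0 + s2*rderiv (rderiv a0),
     s0*a1 + s1*a0 + s1*rderiv a1 + 2*s2*rderiv a0 + s2*rderiv (rderiv a1),
     s1*a1 + s2*a0 + 2*s2*rderiv a1, s2*a1 :]"
  using assms unfolding dop_comp_def
  by (simp add: numeral_2_eq_2 atMost_Suc monom_Suc monom_0 algebra_simps)

lemma comp11:
  assumes "a1 \<noteq> 0" "b1 \<noteq> 0"
  shows "dop_comp [:b0,b1:] [:a0,a1:] = [: b0*a0 + b1*rderiv a0, b0*a1 + b1*a0 + b1*rderiv a1, b1*a1 :]"
  using assms unfolding dop_comp_def
  by (simp add: numeral_2_eq_2 atMost_Suc monom_Suc monom_0 algebra_simps)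

lemmas rderiv_simps = rderiv_add rderiv_mult rderiv_diff rderiv_rconst


lemma deg1_form: "order_op 1 A \<Longrightarrow> A = [:coeff A 0, coeff A 1:] \<and> coeff A 1 \<noteq> 0"
proof -
  assume h: "order_op 1 A"
  hence d: "degree A = 1" "A \<noteq> 0" by (auto simp: order_op_def)
  have "A = [:coeff A 0, coeff A 1:]"
  proof (rule poly_eqI)
    fix n show "coeff A n = coeff [:coeff A 0, coeff A 1:] n"
    proof (cases n)
      case (Suc m) thus ?thesis using d by (cases m) (simp_all add: coeff_eq_0)
    qed simp
  qed
  moreover have "coeff A 1 \<noteq> 0" using d leading_coeff_neq_0[of A] by simp
  ultimately show ?thesis by blast
qed
lemma deg2_form: "order_op 2 A \<Longrightarrow> A = [:coeff A 0, coeff A 1, coeff A 2:] \<and> coeff A 2 \<noteq> 0"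
proof -
  assume h: "order_op 2 A"
  hence d: "degree A = 2" "A \<noteq> 0" by (auto simp: order_op_def)
  have "A = [:coeff A 0, coeff A 1, coeff A 2:]"
  proof (rule poly_eqI)
    fix n show "coeff A n = coeff [:coeff A 0, coeff A 1, coeff A 2:] n"
    proof (cases n)
      case (Suc m) note m = this
      show ?thesis
      proof (cases m)
        case (Suc k) thus ?thesis using d m by (cases k) (simp_all add: coeff_eq_0 numeral_2_eq_2)
      qed (simp add: m)
    qed simp
  qed
  moreover have "coeff A 2 \<noteq> 0" using d leading_coeff_neq_0[of A] by simp
  ultimately show ?thesis by blast
qed

lemma step_bwd:
  assumes A: "order_op 1 A" and B: "order_op 1 B"
  shows "dop_comp A (dop_comp B A + [:rconst c:]) = dop_comp (dop_comp A B + [:rconst c:]) A"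
proof -
  obtain a0 a1 where a: "A = [:a0,a1:]" "a1 \<noteq> 0" using deg1_form[OF A] by blast
  obtain b0 b1 where b: "B = [:b0,b1:]" "b1 \<noteq> 0" using deg1_form[OF B] by blast
  have nz: "b1 * a1 \<noteq> 0" "a1 * b1 \<noteq> 0" using a b by auto
  have e1: "dop_comp B A + [:rconst c:] = [: b0*a0 + b1*rderiv a0 + rconst c, b0*a1 + b1*a0 + b1*rderiv a1, b1*a1 :]"
    unfolding a b using a b by (simp add: comp11)
  have e2: "dop_comp A B + [:rconst c:] = [: a0*b0 + a1*rderiv b0 + rconst c, a0*b1 + a1*b0 + a1*rderiv b1, a1*b1 :]"
    unfolding a b using a b by (simp add: comp11)
  show ?thesis unfolding e1 e2 unfolding a(1) using a b nz
    apply (simp only: comp12[OF a(2) nz(1)] comp21[OF a(2) nz(2)])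
    apply (simp only: pCons_eq_iff rderiv_simps)
    apply (intro conjI)
    apply (simp_all add: algebra_simps)
    done
qed
lemma step_fwd:
  assumes A: "order_op 1 A" and T0: "order_op 2 T0" and T1: "order_op 2 T1"
    and eq: "dop_comp A T0 = dop_comp T1 A"
  shows "\<exists>B lam. order_op 1 B \<and> T0 = dop_comp B A + [:rconst lam:] \<and> T1 = dop_comp A B + [:rconst lam:]"
proof -
  obtain a0 a1 where a: "A = [:a0,a1:]" "a1 \<noteq> 0" using deg1_form[OF A] by blast
  obtain t0 t1 t2 where t: "T0 = [:t0,t1,t2:]" "t2 \<noteq> 0" using deg2_form[OF T0] by blast
  obtain s0 s1 s2 where s: "T1 = [:s0,s1,s2:]" "s2 \<noteq> 0" using deg2_form[OF T1] by blast
  define b1 where "b1 = t2 / a1"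
  define b0 where "b0 = (t1 - b1*a0 - b1*rderiv a1) / a1"
  define r where "r = t0 - b0*a0 - b1*rderiv a0"
  have ht2: "t2 = b1*a1" using a by (simp add: b1_def)
  have ht1: "t1 = b0*a1 + b1*a0 + b1*rderiv a1" using a by (simp add: b0_def)
  have ht0: "t0 = b0*a0 + b1*rderiv a0 + r" by (simp add: r_def)
  have b1nz: "b1 \<noteq> 0" using t a by (simp add: b1_def)
  have T0f: "T0 = [: b0*a0 + b1*rderiv a0 + r, b0*a1 + b1*a0 + b1*rderiv a1, b1*a1 :]"
    using t ht0 ht1 ht2 by simp
  have nz: "b1 * a1 \<noteq> 0" using a b1nz by simp
  have "dop_comp [:a0,a1:] [: b0*a0 + b1*rderiv a0 + r, b0*a1 + b1*a0 + b1*rderiv a1, b1*a1 :]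
     = dop_comp [:s0,s1,s2:] [:a0,a1:]" using eq unfolding T0f a(1) s(1) .
  hence "[: a0*(b0*a0 + b1*rderiv a0 + r) + a1*rderiv (b0*a0 + b1*rderiv a0 + r),
          a0*(b0*a1 + b1*a0 + b1*rderiv a1) + a1*(b0*a0 + b1*rderiv a0 + r) + a1*rderiv (b0*a1 + b1*a0 + b1*rderiv a1),
          a0*(b1*a1) + a1*(b0*a1 + b1*a0 + b1*rderiv a1) + a1*rderiv (b1*a1), a1*(b1*a1) :]
     = [: s0*a0 + s1*rderiv a0 + s2*rderiv (rderiv a0),
     s0*a1 + s1*a0 + s1*rderiv a1 + 2*s2*rderiv a0 + s2*rderiv (rderiv a1),
     s1*a1 + s2*a0 + 2*s2*rderiv a1, s2*a1 :]"
    by (simp only: comp12[OF a(2) nz] comp21[OF a(2) s(2)])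
  hence e0: "a0*(b0*a0 + b1*rderiv a0 + r) + a1*rderiv (b0*a0 + b1*rderiv a0 + r) = s0*a0 + s1*rderiv a0 + s2*rderiv (rderiv a0)"
    and e1: "a0*(b0*a1 + b1*a0 + b1*rderiv a1) + a1*(b0*a0 + b1*rderiv a0 + r) + a1*rderiv (b0*a1 + b1*a0 + b1*rderiv a1) =
        s0*a1 + s1*a0 + s1*rderiv a1 + 2*s2*rderiv a0 + s2*rderiv (rderiv a1)"
    and e2: "a0*(b1*a1) + a1*(b0*a1 + b1*a0 + b1*rderiv a1) + a1*rderiv (b1*a1) = s1*a1 + s2*a0 + 2*s2*rderiv a1"
    and e3: "a1*(b1*a1) = s2*a1"
    by (simp_all only: pCons_eq_iff)
  have hs2: "s2 = b1*a1" using e3 a by simp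
  define \<sigma>1 where "\<sigma>1 = s1 - (a0*b1 + a1*b0 + a1*rderiv b1)"
  have hs1: "s1 = \<sigma>1 + (a0*b1 + a1*b0 + a1*rderiv b1)" by (simp add: \<sigma>1_def)
  have "\<sigma>1 * a1 = 0" using e2 unfolding hs1 hs2 rderiv_simps by algebra
  hence s1z: "\<sigma>1 = 0" using a by simp
  define \<sigma>0 where "\<sigma>0 = s0 - (a0*b0 + a1*rderiv b0 + r)"
  have hs0: "s0 = \<sigma>0 + (a0*b0 + a1*rderiv b0 + r)" by (simp add: \<sigma>0_def)
  have "\<sigma>0 * a1 = 0" using e1 unfolding hs0 hs1 hs2 s1z rderiv_simps by algebra
  hence s0z: "\<sigma>0 = 0" using a by simp
  have "a1 * rderiv r = 0" using e0 unfolding hs0 hs1 hs2 s1z s0z rderiv_simps by algebra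
  hence "rderiv r = 0" using a by simp
  then obtain c where c: "r = rconst c" using rderiv_zero_const by blast
  have B: "order_op 1 [:b0,b1:]" using b1nz by (simp add: order_op_def)
  have "T0 = dop_comp [:b0,b1:] A + [:rconst c:]"
    unfolding T0f a(1) comp11[OF a(2) b1nz] c[symmetric] by simp
  moreover have "T1 = dop_comp A [:b0,b1:] + [:rconst c:]"
    unfolding s(1) a(1) comp11[OF b1nz a(2)] c[symmetric] hs0 hs1 hs2 s0z s1z by (simp add: algebra_simps)
  ultimately show ?thesis using B by blast
qed
theorem mainTheorem2:
  fixes n :: nat and T :: "nat \<Rightarrow> dop"
  assumes "\<forall>k\<le>n. order_op 2 (T k)"
  shows "rational_darboux_chain n T \<longleftrightarrow> factorization_chain n T"
proof
  assume "rational_darboux_chain n T"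
  then obtain A where A: "\<forall>k\<in>{1..n}. order_op 1 (A k) \<and> dop_comp (A k) (T (k - 1)) = dop_comp (T k) (A k)"
    unfolding rational_darboux_chain_def by blast
  have "\<forall>k\<in>{1..n}. \<exists>p. order_op 1 (fst p) \<and> T (k - 1) = dop_comp (fst p) (A k) + [:rconst (snd p):]
           \<and> T k = dop_comp (A k) (fst p) + [:rconst (snd p):]"
  proof
    fix k assume k: "k \<in> {1..n}"
    have "order_op 2 (T (k-1))" "order_op 2 (T k)" using assms k by auto
    then obtain B lam where "order_op 1 B \<and> T (k-1) = dop_comp B (A k) + [:rconst lam:] \<and> T k = dop_comp (A k) B + [:rconst lam:]"
      using step_fwd A k by blast
    thus "\<exists>p. order_op 1 (fst p) \<and> T (k - 1) = dop_comp (fst p) (A k) + [:rconst (snd p):]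
           \<and> T k = dop_comp (A k) (fst p) + [:rconst (snd p):]" by (intro exI[of _ "(B, lam)"]) simp
  qed
  then obtain P where P: "\<forall>k\<in>{1..n}. order_op 1 (fst (P k)) \<and> T (k - 1) = dop_comp (fst (P k)) (A k) + [:rconst (snd (P k)):]
           \<and> T k = dop_comp (A k) (fst (P k)) + [:rconst (snd (P k)):]"
    by metis
  show "factorization_chain n T" unfolding factorization_chain_def
    by (intro exI[of _ A] exI[of _ "\<lambda>k. fst (P k)"] exI[of _ "\<lambda>k. snd (P k)"]) (use A P in blast)
next
  assume "factorization_chain n T"
  then obtain A B lam where h: "\<forall>k\<in>{1..n}. order_op 1 (A k) \<and> order_op 1 (B k) \<and>
          T (k - 1) = dop_comp (B k) (A k) + [:rconst (lam k):] \<and>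
          T k = dop_comp (A k) (B k) + [:rconst (lam k):]"
    unfolding factorization_chain_def by blast
  show "rational_darboux_chain n T" unfolding rational_darboux_chain_def
    by (intro exI[of _ A]) (use h step_bwd in metis)
qed
end
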